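(* With the areas $A(j,r)$ constructed below, for every $\langle j,r\rangle\in\Pi$ we have $A(j,r)\subseteq B(j,7\cdot 5^r)$.
   Context: $(V,d)$ is a metric space of diameter $W$, $F\subseteq V$ a finite set of facilities with opening costs $f_j>0$, $f_{\min}=\min_j f_j$, $B(x,\rho)=\{y\in V:d(x,y)\le\rho\}$. Let $\rho_{\min}=\lfloor\log_5 f_{\min}\rfloor$, $\rho_{\max}=\lceil\log_5 W\rceil$. For each integer $r\in[\rho_{\min},\rho_{\max}]$, let $J'_r=\{j\in F:f_j\le 5^r\}$ and let $J_r$ be a maximal subset of $J'_r$ such that any two facilities of $J_r$ are at distance greater than $5^{r+1}$. $\Pi=\{\langle j,r\rangle:\rho_{\min}\le r\le\rho_{\max},\ j\in J_r\}$. The tree $\mathcal{T}$ on $\Pi$ has as root the unique pair with $r=\rho_{\max}$, and for $r<\rho_{\max}$, $\mathrm{parent}(j,r)=\langle j',r+1\rangle$ where $j'$ is a facility of $J_{r+1}$ closest to $j$ (ties arbitrary). Areas: initialize $A(j,r)=\emptyset$ for all $\langle j,r\rangle\in\Pi$; for each point $p\in V$ lying in some ball $B(j,7\cdot 5^r)$ with $\langle j,r\rangle\in\Pi$, let $r^*$ be the minimum $r$ for which there is a pair $\langle j,r^*\rangle\in\Pi$ with $p\in B(j,7\cdot5^{r^*})$, let $\langle j^*,r^*\rangle$ be such a pair minimizing $d(p,j^* )$, and add $p$ to $A(j^*,r^* )$ and to $A(j',r')$ for every ancestor $\langle j',r'\rangle$ of $\langle j^*,r^*\rangle$ in $\mathcal{T}$.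 *)

theory Defs
  imports "HOL-Analysis.Analysis"
begin

text \<open>Closed ball B(x,rho) = {y in V. d x y <= rho} (V the carrier), via the
library's Metric_space.mcball.  Levels r are integers; 5^r is rendered as
5 powr r.\<close>

definition par_step :: "('a \<Rightarrow> int \<Rightarrow> 'a) \<Rightarrow> 'a \<times> int \<Rightarrow> 'a \<times> int" where
  "par_step P = (\<lambda>(j, r). (P j r, r + 1))"

end

theory Submission
  imports Defs
begin

theorem lemma5:
  fixes V :: "'a set" and d :: "'a \<Rightarrow> 'a \<Rightarrow> real"
    and F :: "'a set" and f :: "'a \<Rightarrow> real"
    and J :: "int \<Rightarrow> 'a set"
    and P :: "'a \<Rightarrow> int \<Rightarrow> 'a"
    and sel :: "'a \<Rightarrow> 'a"
    and W :: real and fmin :: real and rmin rmax :: int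
    and Pi :: "('a \<times> int) set"
    and covered :: "'a \<Rightarrow> bool" and rstar :: "'a \<Rightarrow> int"
    and A :: "'a \<Rightarrow> int \<Rightarrow> 'a set"
  assumes metric: "Metric_space V d"
    and bounded: "Metric_space.mbounded V d V"
    and W_def: "W = Sup {d x y | x y. x \<in> V \<and> y \<in> V}"
    and F_sub: "F \<subseteq> V" and F_fin: "finite F" and F_ne: "F \<noteq> {}"
    and f_pos: "\<And>j. j \<in> F \<Longrightarrow> f j > 0"
    and fmin_def: "fmin = Min (f ` F)"
    and rmin_def: "rmin = \<lfloor>log 5 fmin\<rfloor>"
    and rmax_def: "rmax = \<lceil>log 5 W\<rceil>"
    \<comment> \<open>J r is a maximal 5^(r+1)-separated subset of J'_r = {j in F. f j <= 5^r}\<close>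
    and J_sub: "\<And>r. rmin \<le> r \<Longrightarrow> r \<le> rmax \<Longrightarrow> J r \<subseteq> {j \<in> F. f j \<le> 5 powr r}"
    and J_sep: "\<And>r j j'. rmin \<le> r \<Longrightarrow> r \<le> rmax \<Longrightarrow> j \<in> J r \<Longrightarrow> j' \<in> J r \<Longrightarrow> j \<noteq> j'
                  \<Longrightarrow> d j j' > 5 powr (r + 1)"
    and J_max: "\<And>r S. rmin \<le> r \<Longrightarrow> r \<le> rmax \<Longrightarrow> J r \<subseteq> S \<Longrightarrow> S \<subseteq> {j \<in> F. f j \<le> 5 powr r}
                  \<Longrightarrow> (\<forall>j\<in>S. \<forall>j'\<in>S. j \<noteq> j' \<longrightarrow> d j j' > 5 powr (r + 1)) \<Longrightarrow> S = J r"
    and Pi_def: "Pi = {(j, r). rmin \<le> r \<and> r \<le> rmax \<and> j \<in> J r}"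
    \<comment> \<open>parent of (j,r), r < rmax, is (P j r, r+1) with P j r a closest facility of J (r+1)\<close>
    and P_in: "\<And>j r. (j, r) \<in> Pi \<Longrightarrow> r < rmax \<Longrightarrow> P j r \<in> J (r + 1)"
    and P_closest: "\<And>j r j'. (j, r) \<in> Pi \<Longrightarrow> r < rmax \<Longrightarrow> j' \<in> J (r + 1)
                  \<Longrightarrow> d j (P j r) \<le> d j j'"
    \<comment> \<open>assignment of points\<close>
    and covered_def: "covered = (\<lambda>p. p \<in> V \<and>
                  (\<exists>(j, r) \<in> Pi. p \<in> Metric_space.mcball V d j (7 * 5 powr r)))"
    and rstar_def: "rstar = (\<lambda>p. Min {r. \<exists>j. (j, r) \<in> Pi \<and> p \<in> Metric_space.mcball V d j (7 * 5 powr r)})"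
    and sel_in: "\<And>p. covered p \<Longrightarrow> (sel p, rstar p) \<in> Pi
                  \<and> p \<in> Metric_space.mcball V d (sel p) (7 * 5 powr (rstar p))"
    and sel_min: "\<And>p j. covered p \<Longrightarrow> (j, rstar p) \<in> Pi
                  \<Longrightarrow> p \<in> Metric_space.mcball V d j (7 * 5 powr (rstar p)) \<Longrightarrow> d p (sel p) \<le> d p j"
    \<comment> \<open>p is added to A(sel p, rstar p) and to all its ancestors in the tree\<close>
    and A_def: "A = (\<lambda>j r. {p. covered p \<and> r \<le> rmax \<and>
                  (\<exists>k::nat. (par_step P ^^ k) (sel p, rstar p) = (j, r))})"
  shows "\<forall>(j, r) \<in> Pi. A j r \<subseteq> Metric_space.mcball V d j (7 * 5 powr r)"
proof -
  interpret M: Metric_space V d by (rule metric)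
  have JV: "\<And>j r. (j, r) \<in> Pi \<Longrightarrow> j \<in> V" using J_sub F_sub unfolding Pi_def by blast
  have step: "d j (P j r) \<le> 25 * 5 powr r" if jr: "(j, r) \<in> Pi" and rl: "r < rmax" for j r
  proof (cases "j \<in> J (r + 1)")
    case True
    have "d j (P j r) \<le> d j j" using P_closest[OF jr rl True] .
    also have "d j j = 0" using JV[OF jr] by simp
    finally have "d j (P j r) \<le> 0" .
    moreover have "0 \<le> 25 * 5 powr r" by simp
    ultimately show ?thesis by linarith
  next
    case False
    have r1: "rmin \<le> r + 1" "r + 1 \<le> rmax" using jr rl unfolding Pi_def by auto
    have jF: "j \<in> F" "f j \<le> 5 powr r" using jr J_sub unfolding Pi_def by blast+
    have "5 powr r \<le> 5 powr (r + 1)" by simp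
    hence jF2: "f j \<le> 5 powr (r + 1)" using jF by linarith
    let ?S = "insert j (J (r + 1))"
    have sub: "?S \<subseteq> {j \<in> F. f j \<le> 5 powr (r + 1)}" using J_sub[OF r1] jF jF2 by auto
    have "?S \<noteq> J (r + 1)" using False by auto
    have "\<not> (\<forall>a\<in>?S. \<forall>b\<in>?S. a \<noteq> b \<longrightarrow> d a b > 5 powr (r + 1 + 1))"
    proof (rule notI)
      assume "\<forall>a\<in>?S. \<forall>b\<in>?S. a \<noteq> b \<longrightarrow> d a b > 5 powr (r + 1 + 1)"
      then have "?S = J (r + 1)" using J_max[OF r1 subset_insertI sub] by simp
      then show False using \<open>?S \<noteq> J (r + 1)\<close> by simp
    qed
    then obtain a b where ab: "a \<in> ?S" "b \<in> ?S" "a \<noteq> b" "d a b \<le> 5 powr (r + 1 + 1)"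
      by (meson not_less)
    have "\<exists>j'\<in>J (r + 1). d j j' \<le> 5 powr (r + 1 + 1)"
    proof (cases "a = j")
      case True
      then show ?thesis using ab by auto
    next
      case a: False
      show ?thesis
      proof (cases "b = j")
        case True
        then have "a \<in> J (r + 1)" "d j a \<le> 5 powr (r + 1 + 1)" using ab a M.commute[of a j] by auto
        then show ?thesis by blast
      next
        case False
        then have "d a b > 5 powr (r + 1 + 1)" using a ab J_sep[OF r1] by auto
        then show ?thesis using ab by simp
      qed
    qed
    then obtain j' where j': "j' \<in> J (r + 1)" "d j j' \<le> 5 powr (r + 1 + 1)" by blast
    have "d j (P j r) \<le> d j j'" using P_closest[OF jr rl j'(1)] .
    moreover have "5 powr (r + 1 + 1) = 25 * 5 powr r"
      by (simp add: powr_add)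
    ultimately show ?thesis using j'(2) by linarith
  qed
  have snd_it: "snd ((par_step P ^^ k) x) = snd x + int k" for k x
    by (induction k) (auto simp: par_step_def split: prod.splits)
  show ?thesis
  proof (clarify)
    fix j r p
    assume jr: "(j, r) \<in> Pi" and pA: "p \<in> A j r"
    then have cov: "covered p" and rle: "r \<le> rmax"
      and "\<exists>k::nat. (par_step P ^^ k) (sel p, rstar p) = (j, r)" using A_def by simp_all
    then obtain k where k: "(par_step P ^^ k) (sel p, rstar p) = (j, r)" by blast
    define r0 where "r0 = rstar p"
    have s0: "(sel p, r0) \<in> Pi" "p \<in> V" "d (sel p) p \<le> 7 * 5 powr r0"
      using sel_in[OF cov] unfolding r0_def by auto
    have inv: "r0 + int n \<le> rmax \<Longrightarrow> (par_step P ^^ n) (sel p, r0) \<in> Pi \<and>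
       d (fst ((par_step P ^^ n) (sel p, r0))) p \<le> 25/4 * 5 powr (r0 + int n) + 3/4 * 5 powr r0" for n
    proof (induction n)
      case 0
      then show ?case using s0 by simp
    next
      case (Suc n)
      obtain a b where ab: "(par_step P ^^ n) (sel p, r0) = (a, b)" by fastforce
      have b: "b = r0 + int n" using snd_it[of n "(sel p, r0)"] ab by simp
      have IH: "(a, b) \<in> Pi" "d a p \<le> 25/4 * 5 powr b + 3/4 * 5 powr r0"
        using Suc ab b by auto
      have bl: "b < rmax" using Suc.prems b by simp
      have nx: "(par_step P ^^ Suc n) (sel p, r0) = (P a b, b + 1)"
        using ab by (simp add: par_step_def)
      have Pin: "P a b \<in> J (b + 1)" using P_in[OF IH(1) bl] .
      have inPi: "(P a b, b + 1) \<in> Pi" using IH(1) bl Pin unfolding Pi_def by auto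
      have "d (P a b) p \<le> d (P a b) a + d a p"
        by (rule M.triangle[OF JV[OF inPi] JV[OF IH(1)] s0(2)])
      also have "d (P a b) a \<le> 25 * 5 powr b" using step[OF IH(1) bl] M.commute by simp
      also have "5 powr (real_of_int (r0 + int (Suc n))) = 5 * 5 powr b"
        using b by (simp add: powr_add)
      ultimately show ?case using nx inPi IH(2) b by simp
    qed
    have kk: "r = r0 + int k" using snd_it[of k "(sel p, rstar p)"] k r0_def by simp
    have I: "d j p \<le> 25/4 * 5 powr r + 3/4 * 5 powr r0"
      using inv[of k] kk rle k r0_def by simp
    have "5 powr r0 \<le> 5 powr r" using kk by simp
    hence "d j p \<le> 7 * 5 powr r" using I by linarith
    then show "p \<in> Metric_space.mcball V d j (7 * 5 powr r)"
      using JV[OF jr] s0(2) by simp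
  qed
qed

end
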